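(* Assume the pair $(\mathcal D,\mathcal F)$ is good. Then the Hellinger affinity $\mathrm{AffH}(\mu,\nu)=\int_\Omega\sqrt{p_\mu(\omega)p_\nu(\omega)}\,P(d\omega)$ is a continuous function on $\mathcal M\times\mathcal M$ and $\ln\mathrm{AffH}$ is concave on $\mathcal M\times\mathcal M$. Moreover, for every $r\ge0$, $$2\Phi_*(r)=\max_{x,y}\{g^Tx-g^Ty:\ \mathrm{AffH}(A(x),A(y))\ge e^{-r},\ x,y\in X\}.$$
   Context: Let $(\Omega,P)$ be a Polish space equipped with a $\sigma$-finite Borel measure $P$, let $\mathcal M\subset\mathbb R^m$, and let $\mathcal D=\{p_\mu\}_{\mu\in\mathcal M}$ be a parametric density family: for each $\mu\in\mathcal M$, $p_\mu$ is a nonnegative Borel function on $\Omega$ with $\int_\Omega p_\mu\,dP=1$. Let $\mathcal F$ be a finite-dimensional linear space of Borel functions on $\Omega$ containing the constants. The pair $(\mathcal D,\mathcal F)$ is called good if: (1) $\mathcal M$ is an open convex subset of $\mathbb R^m$; (2) $p_\mu(\omega)>0$ for all $\mu\in\mathcal M$, $\omega\in\Omega$; (3) for all $\mu,\nu\in\mathcal M$ the function $\omega\mapsto\ln(p_\mu(\omega)/p_\nu(\omega))$ belongs to $\mathcal F$; (4) for every $\phi\in\mathcal F$ the function $\mu\mapsto\ln\int_\Omega e^{\phi(\omega)}p_\mu(\omega)P(d\omega)$ is well defined (finite) and concave on $\mathcal M$. Let $X\subset\mathbb R^n$ be a nonempty convex compact set, $x\mapsto A(x)$ an affine map $\mathbb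 R^n\to\mathbb R^m$ with $A(X)\subset\mathcal M$, and $g\in\mathbb R^n$. For $r\ge0$, $x,y\in X$, $\phi\in\mathcal F$, $\alpha>0$ define $$\Phi_r(x,y;\phi,\alpha)=g^Tx-g^Ty+\alpha\ln\int_\Omega e^{\phi(\omega)/\alpha}p_{A(y)}(\omega)P(d\omega)+\alpha\ln\int_\Omega e^{-\phi(\omega)/\alpha}p_{A(x)}(\omega)P(d\omega)+2\alpha r,$$ and $\Phi_*(r)=\tfrac12\inf_{\phi\in\mathcal F,\alpha>0}\sup_{x,y\in X}\Phi_r(x,y;\phi,\alpha)$. *)

theory Defs
  imports "HOL-Analysis.Analysis" "HOL-Probability.Probability"
begin

definition density_family :: "'a measure \<Rightarrow> 'v set \<Rightarrow> ('v \<Rightarrow> 'a \<Rightarrow> real) \<Rightarrow> bool" where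
  "density_family P M p \<longleftrightarrow>
     (\<forall>\<mu>\<in>M. p \<mu> \<in> borel_measurable P \<and> (\<forall>\<omega>\<in>space P. 0 \<le> p \<mu> \<omega>)
            \<and> integrable P (p \<mu>) \<and> (\<integral>\<omega>. p \<mu> \<omega> \<partial>P) = 1)"

definition fin_dim_fun_space :: "'a measure \<Rightarrow> ('a \<Rightarrow> real) set \<Rightarrow> bool" where
  "fin_dim_fun_space P F \<longleftrightarrow>
     (\<exists>B. finite B \<and> B \<subseteq> borel_measurable P \<and>
          F = range (\<lambda>c. \<lambda>\<omega>. \<Sum>b\<in>B. c b * b \<omega>))
     \<and> (\<forall>c::real. (\<lambda>_. c) \<in> F)"

definition good_pair :: "'a measure \<Rightarrow> 'v::real_normed_vector set \<Rightarrow> ('v \<Rightarrow> 'a \<Rightarrow> real) \<Rightarrow> ('a \<Rightarrow> real) set \<Rightarrow> bool" where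
  "good_pair P M p F \<longleftrightarrow>
     open M \<and> convex M
     \<and> (\<forall>\<mu>\<in>M. \<forall>\<omega>\<in>space P. 0 < p \<mu> \<omega>)
     \<and> (\<forall>\<mu>\<in>M. \<forall>\<nu>\<in>M. (\<lambda>\<omega>. ln (p \<mu> \<omega> / p \<nu> \<omega>)) \<in> F)
     \<and> (\<forall>\<phi>\<in>F. (\<forall>\<mu>\<in>M. integrable P (\<lambda>\<omega>. exp (\<phi> \<omega>) * p \<mu> \<omega>))
              \<and> concave_on M (\<lambda>\<mu>. ln (\<integral>\<omega>. exp (\<phi> \<omega>) * p \<mu> \<omega> \<partial>P)))"

definition AffH :: "'a measure \<Rightarrow> ('v \<Rightarrow> 'a \<Rightarrow> real) \<Rightarrow> 'v \<Rightarrow> 'v \<Rightarrow> real" where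
  "AffH P p \<mu> \<nu> = (\<integral>\<omega>. sqrt (p \<mu> \<omega> * p \<nu> \<omega>) \<partial>P)"

definition PhiR :: "'a measure \<Rightarrow> ('v \<Rightarrow> 'a \<Rightarrow> real) \<Rightarrow> ('n \<Rightarrow> 'v) \<Rightarrow> 'n::real_inner
    \<Rightarrow> real \<Rightarrow> 'n \<Rightarrow> 'n \<Rightarrow> ('a \<Rightarrow> real) \<Rightarrow> real \<Rightarrow> real" where
  "PhiR P p A g r x y \<phi> \<alpha> =
     inner g x - inner g y
     + \<alpha> * ln (\<integral>\<omega>. exp (\<phi> \<omega> / \<alpha>) * p (A y) \<omega> \<partial>P)
     + \<alpha> * ln (\<integral>\<omega>. exp (- \<phi> \<omega> / \<alpha>) * p (A x) \<omega> \<partial>P)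
     + 2 * \<alpha> * r"

definition PhiStar :: "'a measure \<Rightarrow> ('v \<Rightarrow> 'a \<Rightarrow> real) \<Rightarrow> ('n \<Rightarrow> 'v) \<Rightarrow> 'n::real_inner
    \<Rightarrow> ('a \<Rightarrow> real) set \<Rightarrow> 'n set \<Rightarrow> real \<Rightarrow> ereal" where
  "PhiStar P p A g F X r =
     ereal (1/2) * (INF \<phi>\<alpha>\<in>F \<times> {0<..}.
        SUP xy\<in>X \<times> X. ereal (PhiR P p A g r (fst xy) (snd xy) (fst \<phi>\<alpha>) (snd \<phi>\<alpha>)))"

end

theory Submission
  imports Defs
begin


lemma young_powr:
  fixes a b w :: real
  assumes "a \<ge> 0" "b \<ge> 0" "0 < w" "w < 1"
  shows "a powr w * b powr (1 - w) \<le> w * a + (1 - w) * b"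
proof (cases "a = 0 \<or> b = 0")
  case True then show ?thesis using assms by auto
next
  case False
  then have ab: "a > 0" "b > 0" using assms by auto
  have "a powr w * b powr (1 - w) = exp (w * ln a + (1 - w) * ln b)"
    using ab by (simp add: powr_def exp_add)
  also have "\<dots> \<le> w * exp (ln a) + (1 - w) * exp (ln b)"
    using exp_convex assms unfolding convex_on_def
    by (metis UNIV_I diff_add_cancel diff_ge_0_iff_ge less_eq_real_def real_scaleR_def add.commute)
  also have "\<dots> = w * a + (1 - w) * b" using ab by simp
  finally show ?thesis .
qed

lemma holder_int:
  fixes M :: "'a measure" and F G :: "'a \<Rightarrow> real"
  assumes Fm: "F \<in> borel_measurable M" and Gm: "G \<in> borel_measurable M"
    and F0: "\<And>x. x \<in> space M \<Longrightarrow> F x \<ge> 0" and G0: "\<And>x. x \<in> space M \<Longrightarrow> G x \<ge> 0"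
    and Fi: "integrable M F" and Gi: "integrable M G" and w: "0 < w" "w < 1"
  shows "integrable M (\<lambda>x. F x powr w * G x powr (1 - w))"
    and "(\<integral>x. F x powr w * G x powr (1 - w) \<partial>M) \<le> (\<integral>x. F x \<partial>M) powr w * (\<integral>x. G x \<partial>M) powr (1 - w)"
proof -
  have hm: "(\<lambda>x. F x powr w * G x powr (1 - w)) \<in> borel_measurable M"
    using Fm Gm by measurable
  have bnd: "\<And>x. x \<in> space M \<Longrightarrow> norm (F x powr w * G x powr (1 - w)) \<le> norm (w * F x + (1 - w) * G x)"
  proof -
    fix x assume x: "x \<in> space M"
    have "0 \<le> F x powr w * G x powr (1 - w)" by simp
    then show "norm (F x powr w * G x powr (1 - w)) \<le> norm (w * F x + (1 - w) * G x)"
      using young_powr[OF F0[OF x] G0[OF x] w] by simp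
  qed
  show hi: "integrable M (\<lambda>x. F x powr w * G x powr (1 - w))"
    by (rule Bochner_Integration.integrable_bound[where f="\<lambda>x. w * F x + (1 - w) * G x"])
       (use Fi Gi hm bnd in auto)
  define A where "A = (\<integral>x. F x \<partial>M)"
  define B where "B = (\<integral>x. G x \<partial>M)"
  have A0: "A \<ge> 0" unfolding A_def using F0 by (simp add: integral_nonneg)
  have B0: "B \<ge> 0" unfolding B_def using G0 by (simp add: integral_nonneg)
  show "(\<integral>x. F x powr w * G x powr (1 - w) \<partial>M) \<le> (\<integral>x. F x \<partial>M) powr w * (\<integral>x. G x \<partial>M) powr (1 - w)"
  proof (cases "A = 0 \<or> B = 0")
    case True
    have "AE x in M. F x powr w * G x powr (1 - w) = 0"
    proof (cases "A = 0")
      case True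
      then have "AE x in M. F x = 0"
        using integral_nonneg_eq_0_iff_AE[OF Fi] F0 unfolding A_def by auto
      then show ?thesis by eventually_elim auto
    next
      case False
      then have "B = 0" using True by auto
      then have "AE x in M. G x = 0"
        using integral_nonneg_eq_0_iff_AE[OF Gi] G0 unfolding B_def by auto
      then show ?thesis by eventually_elim (use w in auto)
    qed
    then have "(\<integral>x. F x powr w * G x powr (1 - w) \<partial>M) = 0"
      by (simp add: integral_eq_zero_AE)
    then show ?thesis by simp
  next
    case False
    then have Ap: "A > 0" and Bp: "B > 0" using A0 B0 by auto
    have pw: "\<And>x. x \<in> space M \<Longrightarrow> F x powr w * G x powr (1 - w) \<le> A powr w * B powr (1 - w) * (w * (F x / A) + (1 - w) * (G x / B))"
    proof -
      fix x assume x: "x \<in> space M"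
      have "(F x / A) powr w * (G x / B) powr (1 - w) \<le> w * (F x / A) + (1 - w) * (G x / B)"
        using young_powr[of "F x / A" "G x / B" w] F0[OF x] G0[OF x] Ap Bp w by auto
      moreover have "(F x / A) powr w * (G x / B) powr (1 - w) = F x powr w * G x powr (1 - w) / (A powr w * B powr (1 - w))"
        using F0[OF x] G0[OF x] Ap Bp by (simp add: powr_divide)
      ultimately show "F x powr w * G x powr (1 - w) \<le> A powr w * B powr (1 - w) * (w * (F x / A) + (1 - w) * (G x / B))"
        using Ap Bp by (simp add: divide_le_eq mult.commute)
    qed
    have "(\<integral>x. F x powr w * G x powr (1 - w) \<partial>M) \<le> (\<integral>x. A powr w * B powr (1 - w) * (w * (F x / A) + (1 - w) * (G x / B)) \<partial>M)"
      by (rule integral_mono) (use hi Fi Gi pw in auto)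
    also have "\<dots> = A powr w * B powr (1 - w) * (w * (A / A) + (1 - w) * (B / B))"
      using Fi Gi by (simp add: A_def B_def)
    also have "\<dots> = A powr w * B powr (1 - w)" using Ap Bp by simp
    finally show ?thesis unfolding A_def B_def .
  qed
qed




lemma two_minimax:
  fixes Z :: "'z::real_normed_vector set" and f1 f2 :: "'z \<Rightarrow> real"
  assumes Zc: "compact Z" and c1: "continuous_on Z f1" and c2: "continuous_on Z f2"
    and k1: "concave_on Z f1" and k2: "concave_on Z f2"
    and cov: "\<forall>z\<in>Z. f1 z < c \<or> f2 z < c"
  shows "\<exists>u. 0 \<le> u \<and> u \<le> 1 \<and> (\<forall>z\<in>Z. u * f1 z + (1 - u) * f2 z < c)"
proof (cases "Z = {}")
  case True then show ?thesis by auto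
next
  case False
  have "continuous_on Z (\<lambda>z. min (f1 z) (f2 z))" using c1 c2 by (intro continuous_on_min)
  then obtain z0 where z0: "z0 \<in> Z" "\<forall>z\<in>Z. min (f1 z) (f2 z) \<le> min (f1 z0) (f2 z0)"
    using continuous_attains_sup[OF Zc False] by blast
  define m where "m = min (f1 z0) (f2 z0)"
  have mc: "m < c" using cov z0 unfolding m_def by auto
  have mz: "\<forall>z\<in>Z. min (f1 z) (f2 z) \<le> m" using z0 unfolding m_def by auto
  define C where "C = {q :: real \<times> real. \<exists>z\<in>Z. fst q \<le> f1 z \<and> snd q \<le> f2 z}"
  define D where "D = {m<..} \<times> {(m::real)<..}"
  have cvxZ: "convex Z" using k1 by (simp add: concave_on_iff)
  have "convex C"
  proof (rule convexI)
    fix q1 q2 :: "real \<times> real" and u v :: real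
    assume q: "q1 \<in> C" "q2 \<in> C" and uv0: "0 \<le> u" "0 \<le> v" "u + v = 1"
    then have uv: "0 \<le> u \<and> 0 \<le> v \<and> u + v = 1" by auto
    from q obtain z1 z2 where z: "z1 \<in> Z" "z2 \<in> Z" "fst q1 \<le> f1 z1" "snd q1 \<le> f2 z1"
      "fst q2 \<le> f1 z2" "snd q2 \<le> f2 z2" unfolding C_def by auto
    have zz: "u *\<^sub>R z1 + v *\<^sub>R z2 \<in> Z" using cvxZ z uv unfolding convex_def by auto
    have e1: "f1 (u *\<^sub>R z1 + v *\<^sub>R z2) \<ge> u * f1 z1 + v * f1 z2"
      using k1 z uv unfolding concave_on_iff by auto
    have e2: "f2 (u *\<^sub>R z1 + v *\<^sub>R z2) \<ge> u * f2 z1 + v * f2 z2"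
      using k2 z uv unfolding concave_on_iff by auto
    have "u * fst q1 + v * fst q2 \<le> u * f1 z1 + v * f1 z2"
      using z uv by (intro add_mono mult_left_mono) auto
    moreover have "u * snd q1 + v * snd q2 \<le> u * f2 z1 + v * f2 z2"
      using z uv by (intro add_mono mult_left_mono) auto
    ultimately show "u *\<^sub>R q1 + v *\<^sub>R q2 \<in> C"
      unfolding C_def using zz e1 e2 by (intro CollectI bexI[of _ "u *\<^sub>R z1 + v *\<^sub>R z2"]) auto
  qed
  moreover have "convex D" unfolding D_def by (intro convex_Times) auto
  moreover have "C \<noteq> {}" unfolding C_def using z0 by (auto intro!: exI[of _ "(f1 z0, f2 z0)"])
  moreover have "D \<noteq> {}" unfolding D_def by (auto intro!: exI[of _ "(m+1, m+1)"])
  moreover have "C \<inter> D = {}"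
  proof -
    { fix q assume "q \<in> C" "q \<in> D"
      then obtain z where "z \<in> Z" "fst q \<le> f1 z" "snd q \<le> f2 z" "fst q > m" "snd q > m"
        unfolding C_def D_def by auto
      with mz have False by fastforce }
    then show ?thesis by auto
  qed
  ultimately obtain a b where ab: "a \<noteq> 0" "\<forall>x\<in>C. inner a x \<le> b" "\<forall>x\<in>D. inner a x \<ge> b"
    using separating_hyperplane_sets by metis
  obtain a1 a2 where a: "a = (a1, a2)" by (cases a)
  have Dpt: "a1 * s + a2 * t \<ge> b" if "s > m" "t > m" for s t
    using ab(3) that unfolding D_def a by auto
  have a1: "a1 \<ge> 0"
  proof (rule ccontr)
    assume "\<not> a1 \<ge> 0"
    define K where "K = (\<bar>b - a1 * (m + 1) - a2 * (m + 1)\<bar> + 1) / (- a1)"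
    have K: "K > 0" using \<open>\<not> a1 \<ge> 0\<close> unfolding K_def by (intro divide_pos_pos) auto
    have "a1 * (m + 1 + K) + a2 * (m + 1) \<ge> b" using Dpt K by auto
    moreover have "a1 * K = - (\<bar>b - a1 * (m + 1) - a2 * (m + 1)\<bar> + 1)"
      using \<open>\<not> a1 \<ge> 0\<close> unfolding K_def by auto
    ultimately show False by (auto simp: algebra_simps)
  qed
  have a2: "a2 \<ge> 0"
  proof (rule ccontr)
    assume "\<not> a2 \<ge> 0"
    define K where "K = (\<bar>b - a1 * (m + 1) - a2 * (m + 1)\<bar> + 1) / (- a2)"
    have K: "K > 0" using \<open>\<not> a2 \<ge> 0\<close> unfolding K_def by (intro divide_pos_pos) auto
    have "a1 * (m + 1) + a2 * (m + 1 + K) \<ge> b" using Dpt K by auto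
    moreover have "a2 * K = - (\<bar>b - a1 * (m + 1) - a2 * (m + 1)\<bar> + 1)"
      using \<open>\<not> a2 \<ge> 0\<close> unfolding K_def by auto
    ultimately show False by (auto simp: algebra_simps)
  qed
  have spos: "a1 + a2 > 0" using a1 a2 ab(1) a by (auto simp: zero_prod_def)
  have bm: "b \<le> (a1 + a2) * m"
  proof (rule ccontr)
    assume "\<not> b \<le> (a1 + a2) * m"
    define e where "e = (b - (a1 + a2) * m) / (2 * (a1 + a2))"
    have e: "e > 0" using \<open>\<not> b \<le> (a1 + a2) * m\<close> spos unfolding e_def by auto
    have "a1 * (m + e) + a2 * (m + e) \<ge> b" using Dpt e by auto
    moreover have "(a1 + a2) * e = (b - (a1 + a2) * m) / 2" using spos unfolding e_def by (simp add: field_simps)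
    ultimately show False using \<open>\<not> b \<le> (a1 + a2) * m\<close> by (auto simp: algebra_simps)
  qed
  define u where "u = a1 / (a1 + a2)"
  have h1u: "1 - u = a2 / (a1 + a2)" unfolding u_def using spos by (auto simp: field_simps)
  have "\<forall>z\<in>Z. u * f1 z + (1 - u) * f2 z < c"
  proof
    fix z assume z: "z \<in> Z"
    have "a1 * f1 z + a2 * f2 z \<le> b" using ab(2) z unfolding C_def a by auto
    then have "a1 * f1 z + a2 * f2 z \<le> (a1 + a2) * m" using bm by auto
    then have "(a1 * f1 z + a2 * f2 z) / (a1 + a2) \<le> m" using spos by (simp add: divide_le_eq mult.commute)
    moreover have "u * f1 z + (1 - u) * f2 z = (a1 * f1 z + a2 * f2 z) / (a1 + a2)"
      unfolding h1u unfolding u_def by (simp add: add_divide_distrib)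
    ultimately show "u * f1 z + (1 - u) * f2 z < c" using mc by auto
  qed
  moreover have "0 \<le> u" "u \<le> 1" unfolding u_def using a1 a2 spos by auto
  ultimately show ?thesis by blast
qed




lemma concave_on_subset': "concave_on T f \<Longrightarrow> S \<subseteq> T \<Longrightarrow> convex S \<Longrightarrow> concave_on S f"
  unfolding concave_on_def by (rule convex_on_subset)

lemma finite_minimax:
  fixes L :: "'z::real_normed_vector \<Rightarrow> 'y \<Rightarrow> real"
  assumes cl: "\<And>y1 y2 u. y1 \<in> Y \<Longrightarrow> y2 \<in> Y \<Longrightarrow> 0 \<le> u \<Longrightarrow> u \<le> 1 \<Longrightarrow>
        \<exists>y\<in>Y. \<forall>z\<in>Z0. L z y \<le> u * L z y1 + (1 - u) * L z y2"
    and cont: "\<And>y. y \<in> Y \<Longrightarrow> continuous_on Z0 (\<lambda>z. L z y)"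
    and conc: "\<And>y. y \<in> Y \<Longrightarrow> concave_on Z0 (\<lambda>z. L z y)"
  shows "finite S \<Longrightarrow> S \<noteq> {} \<Longrightarrow> S \<subseteq> Y \<Longrightarrow> \<forall>Z. Z \<subseteq> Z0 \<longrightarrow> compact Z \<longrightarrow> convex Z \<longrightarrow>
      (\<forall>z\<in>Z. \<exists>y\<in>S. L z y < c) \<longrightarrow> (\<exists>y\<in>Y. \<forall>z\<in>Z. L z y < c)"
proof (induction S rule: finite_ne_induct)
  case (singleton x)
  then show ?case by auto
next
  case (insert x S)
  show ?case
  proof (intro allI impI)
    fix Z assume Z: "Z \<subseteq> Z0" "compact Z" "convex Z" and cov: "\<forall>z\<in>Z. \<exists>y\<in>insert x S. L z y < c"
    have xY: "x \<in> Y" using insert by auto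
    define Z' where "Z' = Z \<inter> (\<lambda>z. L z x) -` {c..}"
    have cZ: "continuous_on Z (\<lambda>z. L z x)" using cont[OF xY] Z continuous_on_subset by blast
    have "closed Z'" unfolding Z'_def
      by (rule continuous_closed_preimage[OF cZ]) (use Z compact_imp_closed in auto)
    have "Z' = Z \<inter> Z'" unfolding Z'_def by auto
    then have cZ': "compact Z'" using compact_Int_closed[OF Z(2) \<open>closed Z'\<close>] by simp
    have vZ': "convex Z'"
    proof (rule convexI)
      fix z1 z2 u v assume h: "z1 \<in> Z'" "z2 \<in> Z'" "0 \<le> (u::real)" "0 \<le> v" "u + v = 1"
      have zz: "u *\<^sub>R z1 + v *\<^sub>R z2 \<in> Z" using Z(3) h unfolding Z'_def convex_def by auto
      have z12: "z1 \<in> Z0" "z2 \<in> Z0" using h Z(1) unfolding Z'_def by auto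
      have "L (u *\<^sub>R z1 + v *\<^sub>R z2) x \<ge> u * L z1 x + v * L z2 x"
        using conc[OF xY] z12 h(3-5) unfolding concave_on_iff by blast
      moreover have "u * L z1 x + v * L z2 x \<ge> u * c + v * c"
        using h unfolding Z'_def by (intro add_mono mult_left_mono) auto
      moreover have "u * c + v * c = c"
      proof -
        have "u * c + v * c = (u + v) * c" by (simp add: algebra_simps)
        then show ?thesis by (simp add: h(5))
      qed
      ultimately have "c \<le> L (u *\<^sub>R z1 + v *\<^sub>R z2) x" by linarith
      then show "u *\<^sub>R z1 + v *\<^sub>R z2 \<in> Z'" using zz unfolding Z'_def by simp
    qed
    have "\<forall>z\<in>Z'. \<exists>y\<in>S. L z y < c"
    proof
      fix z assume z: "z \<in> Z'"
      then have zZ: "z \<in> Z" and zc: "c \<le> L z x" unfolding Z'_def by auto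
      from cov zZ obtain y where y: "y \<in> insert x S" "L z y < c" by blast
      then have "y \<noteq> x" using zc by auto
      then show "\<exists>y\<in>S. L z y < c" using y by auto
    qed
    moreover have "Z' \<subseteq> Z0" using Z(1) unfolding Z'_def by auto
    moreover have "S \<subseteq> Y" using insert.prems by auto
    ultimately have "\<exists>y\<in>Y. \<forall>z\<in>Z'. L z y < c"
      using insert.IH cZ' vZ' by blast
    then obtain y' where y': "y' \<in> Y" "\<forall>z\<in>Z'. L z y' < c" by blast
    have cov2: "\<forall>z\<in>Z. L z x < c \<or> L z y' < c" 
    proof
      fix z assume "z \<in> Z"
      show "L z x < c \<or> L z y' < c"
      proof (cases "c \<le> L z x")
        case True then have "z \<in> Z'" using \<open>z \<in> Z\<close> unfolding Z'_def by simp
        then show ?thesis using y'(2) by blast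
      qed simp
    qed
    obtain u where u: "0 \<le> u" "u \<le> 1" "\<forall>z\<in>Z. u * L z x + (1 - u) * L z y' < c"
      using two_minimax[OF Z(2) cZ continuous_on_subset[OF cont[OF y'(1)] Z(1)]
          concave_on_subset'[OF conc[OF xY] Z(1,3)] concave_on_subset'[OF conc[OF y'(1)] Z(1,3)] cov2]
      by blast
    obtain y where y: "y \<in> Y" "\<forall>z\<in>Z0. L z y \<le> u * L z x + (1 - u) * L z y'"
      using cl[OF xY y'(1) u(1,2)] by blast
    show "\<exists>y\<in>Y. \<forall>z\<in>Z. L z y < c"
    proof (intro bexI[of _ y] ballI)
      fix z assume z: "z \<in> Z"
      then have "L z y \<le> u * L z x + (1 - u) * L z y'" using y(2) Z(1) by blast
      then show "L z y < c" using u(3) z by (meson order.strict_trans1)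
    qed (use y in auto)
  qed
qed





lemma minimax_strict:
  fixes L :: "'z::real_normed_vector \<Rightarrow> 'y \<Rightarrow> real"
  assumes Zc: "compact Z" and Zv: "convex Z" and Yne: "Y \<noteq> {}"
    and cl: "\<And>y1 y2 u. y1 \<in> Y \<Longrightarrow> y2 \<in> Y \<Longrightarrow> 0 \<le> u \<Longrightarrow> u \<le> 1 \<Longrightarrow>
        \<exists>y\<in>Y. \<forall>z\<in>Z. L z y \<le> u * L z y1 + (1 - u) * L z y2"
    and cont: "\<And>y. y \<in> Y \<Longrightarrow> continuous_on Z (\<lambda>z. L z y)"
    and conc: "\<And>y. y \<in> Y \<Longrightarrow> concave_on Z (\<lambda>z. L z y)"
    and cov: "\<forall>z\<in>Z. \<exists>y\<in>Y. L z y < c"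
  shows "\<exists>y\<in>Y. \<forall>z\<in>Z. L z y < c"
proof (rule ccontr)
  assume neg: "\<not> (\<exists>y\<in>Y. \<forall>z\<in>Z. L z y < c)"
  define f where "f y = Z \<inter> (\<lambda>z. L z y) -` {c..}" for y
  have "Z \<inter> (\<Inter>y\<in>Y. f y) \<noteq> {}"
  proof (rule compact_imp_fip_image[OF Zc])
    fix y assume "y \<in> Y"
    show "closed (f y)" unfolding f_def
      by (rule continuous_closed_preimage[OF cont[OF \<open>y \<in> Y\<close>]]) (use Zc compact_imp_closed in auto)
  next
    fix I' assume I': "finite I'" "I' \<subseteq> Y"
    show "Z \<inter> (\<Inter>y\<in>I'. f y) \<noteq> {}"
    proof (cases "I' = {}")
      case True
      then show ?thesis using neg Yne by auto
    next
      case False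
      show ?thesis
      proof
        assume e: "Z \<inter> (\<Inter>y\<in>I'. f y) = {}"
        have "\<forall>z\<in>Z. \<exists>y\<in>I'. L z y < c"
        proof
          fix z assume "z \<in> Z"
          then have "z \<notin> (\<Inter>y\<in>I'. f y)" using e by auto
          then obtain y where "y \<in> I'" "z \<notin> f y" by blast
          then have "\<not> c \<le> L z y" using \<open>z \<in> Z\<close> unfolding f_def by simp
          then show "\<exists>y\<in>I'. L z y < c" using \<open>y \<in> I'\<close> by (intro bexI[of _ y]) simp_all
        qed
        then show False
          using finite_minimax[OF cl cont conc I'(1) False I'(2), of c] Zc Zv neg by blast
      qed
    qed
  qed
  then obtain z where "z \<in> Z" "\<forall>y\<in>Y. c \<le> L z y" unfolding f_def using Yne by auto
  then show False using cov by (meson not_le)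
qed




lemma persp_ineq:
  fixes M :: "'a measure" and q f1 f2 :: "'a \<Rightarrow> real"
  assumes q0: "\<And>x. x \<in> space M \<Longrightarrow> q x \<ge> 0"
    and a: "a1 > 0" "a2 > 0" and u: "0 \<le> u" "u \<le> 1"
    and i1: "integrable M (\<lambda>x. exp (f1 x / a1) * q x)"
    and i2: "integrable M (\<lambda>x. exp (f2 x / a2) * q x)"
    and p1: "(\<integral>x. exp (f1 x / a1) * q x \<partial>M) > 0"
    and p2: "(\<integral>x. exp (f2 x / a2) * q x \<partial>M) > 0"
    and p: "(\<integral>x. exp ((u * f1 x + (1 - u) * f2 x) / (u * a1 + (1 - u) * a2)) * q x \<partial>M) > 0"
  shows "(u * a1 + (1 - u) * a2) * ln (\<integral>x. exp ((u * f1 x + (1 - u) * f2 x) / (u * a1 + (1 - u) * a2)) * q x \<partial>M)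
      \<le> u * (a1 * ln (\<integral>x. exp (f1 x / a1) * q x \<partial>M)) + (1 - u) * (a2 * ln (\<integral>x. exp (f2 x / a2) * q x \<partial>M))"
proof (cases "u = 0 \<or> u = 1")
  case True then show ?thesis by auto
next
  case False
  then have u': "0 < u" "u < 1" using u by auto
  define a where "a = u * a1 + (1 - u) * a2"
  have apos: "a > 0" unfolding a_def using a u' by (simp add: add_pos_pos)
  define w where "w = u * a1 / a"
  have w: "0 < w" "w < 1" unfolding w_def using apos a u' by (auto simp: a_def)
  have w1: "1 - w = (1 - u) * a2 / a" unfolding w_def using apos by (simp add: a_def field_simps)
  define I1 where "I1 = (\<integral>x. exp (f1 x / a1) * q x \<partial>M)"
  define I2 where "I2 = (\<integral>x. exp (f2 x / a2) * q x \<partial>M)"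
  define I where "I = (\<integral>x. exp ((u * f1 x + (1 - u) * f2 x) / a) * q x \<partial>M)"
  have pt: "exp ((u * f1 x + (1 - u) * f2 x) / a) * q x
      = (exp (f1 x / a1) * q x) powr w * (exp (f2 x / a2) * q x) powr (1 - w)" if x: "x \<in> space M" for x
  proof (cases "q x = 0")
    case True then show ?thesis using w by simp
  next
    case False
    then have qp: "q x > 0" using q0[OF x] by auto
    have "(exp (f1 x / a1) * q x) powr w * (exp (f2 x / a2) * q x) powr (1 - w)
        = (exp (f1 x / a1) powr w * exp (f2 x / a2) powr (1 - w)) * (q x powr w * q x powr (1 - w))"
      using qp by (simp add: powr_mult)
    also have "q x powr w * q x powr (1 - w) = q x" using qp by (simp add: powr_add[symmetric])
    also have "exp (f1 x / a1) powr w * exp (f2 x / a2) powr (1 - w) = exp (w * (f1 x / a1) + (1 - w) * (f2 x / a2))"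
      by (simp add: powr_def exp_add)
    also have "w * (f1 x / a1) + (1 - w) * (f2 x / a2) = (u * f1 x + (1 - u) * f2 x) / a"
      unfolding w1 unfolding w_def using a apos by (simp add: field_simps)
    finally show ?thesis by simp
  qed
  have m1: "(\<lambda>x. exp (f1 x / a1) * q x) \<in> borel_measurable M" using i1 by auto
  have m2: "(\<lambda>x. exp (f2 x / a2) * q x) \<in> borel_measurable M" using i2 by auto
  have H: "(\<integral>x. (exp (f1 x / a1) * q x) powr w * (exp (f2 x / a2) * q x) powr (1 - w) \<partial>M) \<le> I1 powr w * I2 powr (1 - w)"
    unfolding I1_def I2_def
    by (rule holder_int(2)[OF m1 m2 _ _ i1 i2 w]) (use q0 in auto)
  have "I = (\<integral>x. (exp (f1 x / a1) * q x) powr w * (exp (f2 x / a2) * q x) powr (1 - w) \<partial>M)"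
    unfolding I_def by (rule Bochner_Integration.integral_cong) (use pt in auto)
  with H have "I \<le> I1 powr w * I2 powr (1 - w)" by simp
  moreover have Ip: "I > 0" using p unfolding I_def a_def .
  moreover have "I1 > 0" "I2 > 0" using p1 p2 unfolding I1_def I2_def by auto
  ultimately have "ln I \<le> ln (I1 powr w * I2 powr (1 - w))" by simp
  also have "\<dots> = w * ln I1 + (1 - w) * ln I2" using \<open>I1 > 0\<close> \<open>I2 > 0\<close> by (simp add: ln_mult ln_powr)
  finally have "a * ln I \<le> a * (w * ln I1 + (1 - w) * ln I2)" using apos by simp
  also have "\<dots> = u * (a1 * ln I1) + (1 - u) * (a2 * ln I2)"
    unfolding w1 unfolding w_def using apos by (simp add: field_simps)
  finally show ?thesis unfolding I_def I1_def I2_def a_def .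
qed




locale setting =
  fixes P :: "'a measure" and M :: "'v::euclidean_space set" and p :: "'v \<Rightarrow> 'a \<Rightarrow> real"
    and F :: "('a \<Rightarrow> real) set"
  assumes dens: "density_family P M p" and fd: "fin_dim_fun_space P F" and good: "good_pair P M p F"
begin

lemma openM: "open M" and convM: "convex M" using good unfolding good_pair_def by auto

lemma pos: "\<mu> \<in> M \<Longrightarrow> \<omega> \<in> space P \<Longrightarrow> p \<mu> \<omega> > 0"
  using good unfolding good_pair_def by auto

lemma dens1: "\<mu> \<in> M \<Longrightarrow> integrable P (p \<mu>)" "\<mu> \<in> M \<Longrightarrow> (\<integral>\<omega>. p \<mu> \<omega> \<partial>P) = 1"
  using dens unfolding density_family_def by auto

lemma Fcomb:
  assumes "\<phi>1 \<in> F" "\<phi>2 \<in> F"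
  shows "(\<lambda>\<omega>. a * \<phi>1 \<omega> + b * \<phi>2 \<omega>) \<in> F"
proof -
  obtain B where B: "F = range (\<lambda>c. \<lambda>\<omega>. \<Sum>e\<in>B. c e * e \<omega>)"
    using fd unfolding fin_dim_fun_space_def by blast
  obtain c1 where c1: "\<phi>1 = (\<lambda>\<omega>. \<Sum>e\<in>B. c1 e * e \<omega>)" using assms(1) B by auto
  obtain c2 where c2: "\<phi>2 = (\<lambda>\<omega>. \<Sum>e\<in>B. c2 e * e \<omega>)" using assms(2) B by auto
  have "(\<lambda>\<omega>. a * \<phi>1 \<omega> + b * \<phi>2 \<omega>) = (\<lambda>\<omega>. \<Sum>e\<in>B. (a * c1 e + b * c2 e) * e \<omega>)"
    unfolding c1 c2 by (simp add: sum_distrib_left sum.distrib algebra_simps)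
  then show ?thesis using B by auto
qed

lemma Fconst: "(\<lambda>_. k) \<in> F"
  using fd unfolding fin_dim_fun_space_def by auto

lemma Fscale: "\<phi> \<in> F \<Longrightarrow> (\<lambda>\<omega>. a * \<phi> \<omega>) \<in> F"
  using Fcomb[of \<phi> \<phi> a 0] by simp

lemma Fneg: "\<phi> \<in> F \<Longrightarrow> (\<lambda>\<omega>. - \<phi> \<omega>) \<in> F"
  using Fscale[of \<phi> "-1"] by simp

lemma Fdiv: "\<phi> \<in> F \<Longrightarrow> (\<lambda>\<omega>. \<phi> \<omega> / a) \<in> F"
  using Fscale[of \<phi> "1/a"] by simp

lemma Fint: "\<phi> \<in> F \<Longrightarrow> \<mu> \<in> M \<Longrightarrow> integrable P (\<lambda>\<omega>. exp (\<phi> \<omega>) * p \<mu> \<omega>)"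
  using good unfolding good_pair_def by auto

lemma Fconc: "\<phi> \<in> F \<Longrightarrow> concave_on M (\<lambda>\<mu>. ln (\<integral>\<omega>. exp (\<phi> \<omega>) * p \<mu> \<omega> \<partial>P))"
  using good unfolding good_pair_def by auto

lemma Ipos:
  assumes "\<phi> \<in> F" "\<mu> \<in> M"
  shows "(\<integral>\<omega>. exp (\<phi> \<omega>) * p \<mu> \<omega> \<partial>P) > 0"
proof (rule ccontr)
  assume "\<not> ?thesis"
  moreover have "(\<integral>\<omega>. exp (\<phi> \<omega>) * p \<mu> \<omega> \<partial>P) \<ge> 0"
    using pos[OF assms(2)] by (intro Bochner_Integration.integral_nonneg) (auto simp: less_imp_le)
  ultimately have "(\<integral>\<omega>. exp (\<phi> \<omega>) * p \<mu> \<omega> \<partial>P) = 0" by simp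
  then have "AE \<omega> in P. exp (\<phi> \<omega>) * p \<mu> \<omega> = 0"
    using integral_nonneg_eq_0_iff_AE[OF Fint[OF assms]] pos[OF assms(2)] by (auto simp: less_imp_le)
  then have "AE \<omega> in P. p \<mu> \<omega> = 0" by eventually_elim simp
  then have "(\<integral>\<omega>. p \<mu> \<omega> \<partial>P) = 0" by (simp add: integral_eq_zero_AE)
  then show False using dens1(2)[OF assms(2)] by simp
qed

lemma sq1: "(a::real) > 0 \<Longrightarrow> b > 0 \<Longrightarrow> exp ((1/2) * ln (a / b)) = sqrt (a / b)"
  by (simp add: powr_half_sqrt[symmetric] powr_def)

lemma sq2: "(a::real) > 0 \<Longrightarrow> b > 0 \<Longrightarrow> sqrt (a / b) * b = sqrt (a * b)"
proof -
  assume a: "a > 0" and b: "b > 0"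
  have "a * b = (a / b) * (b * b)" using b by simp
  then have "sqrt (a * b) = sqrt (a / b) * sqrt (b * b)" by (simp only: real_sqrt_mult)
  moreover have "sqrt (b * b) = b" using b by simp
  ultimately show ?thesis by simp
qed

lemma sq3: "(a::real) > 0 \<Longrightarrow> b > 0 \<Longrightarrow> - ((1/2) * ln (a / b)) = (1/2) * ln (b / a)"
  by (simp add: ln_div field_simps)

definition psi0 :: "'v \<Rightarrow> 'v \<Rightarrow> 'a \<Rightarrow> real" where
  "psi0 \<mu> \<nu> = (\<lambda>\<omega>. (1/2) * ln (p \<mu> \<omega> / p \<nu> \<omega>))"

lemma psi0F: "\<mu> \<in> M \<Longrightarrow> \<nu> \<in> M \<Longrightarrow> psi0 \<mu> \<nu> \<in> F"
  unfolding psi0_def by (rule Fscale) (use good in \<open>auto simp: good_pair_def\<close>)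

lemma aff_eq1:
  assumes "\<mu> \<in> M" "\<nu> \<in> M"
  shows "AffH P p \<mu> \<nu> = (\<integral>\<omega>. exp (psi0 \<mu> \<nu> \<omega>) * p \<nu> \<omega> \<partial>P)"
  unfolding AffH_def
proof (rule Bochner_Integration.integral_cong)
  fix \<omega> assume w: "\<omega> \<in> space P"
  have a: "p \<mu> \<omega> > 0" and b: "p \<nu> \<omega> > 0" using pos assms w by auto
  show "sqrt (p \<mu> \<omega> * p \<nu> \<omega>) = exp (psi0 \<mu> \<nu> \<omega>) * p \<nu> \<omega>"
    unfolding psi0_def using a b by (simp only: sq1 sq2)
qed simp

lemma aff_eq2:
  assumes "\<mu> \<in> M" "\<nu> \<in> M"
  shows "AffH P p \<mu> \<nu> = (\<integral>\<omega>. exp (- psi0 \<mu> \<nu> \<omega>) * p \<mu> \<omega> \<partial>P)"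
  unfolding AffH_def
proof (rule Bochner_Integration.integral_cong)
  fix \<omega> assume w: "\<omega> \<in> space P"
  have a: "p \<mu> \<omega> > 0" and b: "p \<nu> \<omega> > 0" using pos assms w by auto
  have "sqrt (p \<mu> \<omega> * p \<nu> \<omega>) = sqrt (p \<nu> \<omega> * p \<mu> \<omega>)" by (simp add: mult.commute)
  then show "sqrt (p \<mu> \<omega> * p \<nu> \<omega>) = exp (- psi0 \<mu> \<nu> \<omega>) * p \<mu> \<omega>"
    unfolding psi0_def using a b by (simp only: sq1 sq2 sq3)
qed simp

end


context setting begin

lemma aff_pos: "\<mu> \<in> M \<Longrightarrow> \<nu> \<in> M \<Longrightarrow> AffH P p \<mu> \<nu> > 0"
  using aff_eq1 Ipos psi0F by auto

lemma CS:
  assumes phi: "\<phi> \<in> F" and mn: "\<mu> \<in> M" "\<nu> \<in> M"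
  shows "2 * ln (AffH P p \<mu> \<nu>) \<le> ln (\<integral>\<omega>. exp (\<phi> \<omega>) * p \<nu> \<omega> \<partial>P) + ln (\<integral>\<omega>. exp (- \<phi> \<omega>) * p \<mu> \<omega> \<partial>P)"
proof -
  have nphi: "(\<lambda>\<omega>. - \<phi> \<omega>) \<in> F" using Fneg[OF phi] .
  define I1 where "I1 = (\<integral>\<omega>. exp (\<phi> \<omega>) * p \<nu> \<omega> \<partial>P)"
  define I2 where "I2 = (\<integral>\<omega>. exp (- \<phi> \<omega>) * p \<mu> \<omega> \<partial>P)"
  have i1: "integrable P (\<lambda>\<omega>. exp (\<phi> \<omega>) * p \<nu> \<omega>)" using Fint[OF phi mn(2)] .
  have i2: "integrable P (\<lambda>\<omega>. exp (- \<phi> \<omega>) * p \<mu> \<omega>)" using Fint[OF nphi mn(1)] by simp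
  have I1p: "I1 > 0" unfolding I1_def using Ipos[OF phi mn(2)] .
  have I2p: "I2 > 0" unfolding I2_def using Ipos[OF nphi mn(1)] by simp
  have H: "(\<integral>\<omega>. (exp (\<phi> \<omega>) * p \<nu> \<omega>) powr (1/2) * (exp (- \<phi> \<omega>) * p \<mu> \<omega>) powr (1 - 1/2) \<partial>P)
     \<le> I1 powr (1/2) * I2 powr (1 - 1/2)"
    unfolding I1_def I2_def
    by (rule holder_int(2)) (use i1 i2 pos mn in \<open>auto simp: less_imp_le\<close>)
  have "AffH P p \<mu> \<nu> = (\<integral>\<omega>. (exp (\<phi> \<omega>) * p \<nu> \<omega>) powr (1/2) * (exp (- \<phi> \<omega>) * p \<mu> \<omega>) powr (1 - 1/2) \<partial>P)"
    unfolding AffH_def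
  proof (rule Bochner_Integration.integral_cong)
    fix \<omega> assume w: "\<omega> \<in> space P"
    have a: "p \<mu> \<omega> > 0" and b: "p \<nu> \<omega> > 0" using pos mn w by auto
    have "(exp (\<phi> \<omega>) * p \<nu> \<omega>) powr (1/2) * (exp (- \<phi> \<omega>) * p \<mu> \<omega>) powr (1 - 1/2)
       = sqrt (exp (\<phi> \<omega>) * p \<nu> \<omega>) * sqrt (exp (- \<phi> \<omega>) * p \<mu> \<omega>)"
      using a b by (simp add: powr_half_sqrt less_imp_le)
    also have "\<dots> = sqrt ((exp (\<phi> \<omega>) * p \<nu> \<omega>) * (exp (- \<phi> \<omega>) * p \<mu> \<omega>))"
      by (simp only: real_sqrt_mult)
    also have "(exp (\<phi> \<omega>) * p \<nu> \<omega>) * (exp (- \<phi> \<omega>) * p \<mu> \<omega>) = (exp (\<phi> \<omega>) * exp (- \<phi> \<omega>)) * (p \<mu> \<omega> * p \<nu> \<omega>)"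
      by (simp only: mult_ac)
    also have "exp (\<phi> \<omega>) * exp (- \<phi> \<omega>) = 1" by (simp add: exp_minus)
    finally show "sqrt (p \<mu> \<omega> * p \<nu> \<omega>) = (exp (\<phi> \<omega>) * p \<nu> \<omega>) powr (1/2) * (exp (- \<phi> \<omega>) * p \<mu> \<omega>) powr (1 - 1/2)"
      by (simp only: mult_1 eq_commute)
  qed simp
  with H have "AffH P p \<mu> \<nu> \<le> I1 powr (1/2) * I2 powr (1/2)" by simp
  then have "ln (AffH P p \<mu> \<nu>) \<le> ln (I1 powr (1/2) * I2 powr (1/2))"
    using aff_pos[OF mn] I1p I2p by simp
  also have "\<dots> = (1/2) * ln I1 + (1/2) * ln I2" using I1p I2p by (simp add: ln_mult ln_powr)
  finally show ?thesis unfolding I1_def I2_def by simp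
qed

lemma ln_aff_eq:
  assumes "\<mu> \<in> M" "\<nu> \<in> M"
  shows "2 * ln (AffH P p \<mu> \<nu>) = ln (\<integral>\<omega>. exp (psi0 \<mu> \<nu> \<omega>) * p \<nu> \<omega> \<partial>P) + ln (\<integral>\<omega>. exp (- psi0 \<mu> \<nu> \<omega>) * p \<mu> \<omega> \<partial>P)"
  using aff_eq1[OF assms] aff_eq2[OF assms] by simp

lemma aff_le1:
  assumes "\<mu> \<in> M" "\<nu> \<in> M"
  shows "AffH P p \<mu> \<nu> \<le> 1"
proof -
  have "2 * ln (AffH P p \<mu> \<nu>) \<le> ln (\<integral>\<omega>. exp 0 * p \<nu> \<omega> \<partial>P) + ln (\<integral>\<omega>. exp (- 0) * p \<mu> \<omega> \<partial>P)"
    using CS[OF Fconst[of 0] assms] by simp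
  then have "ln (AffH P p \<mu> \<nu>) \<le> 0" using dens1(2) assms by simp
  then show ?thesis using aff_pos[OF assms] by simp
qed

lemma aff_self:
  assumes "\<mu> \<in> M"
  shows "AffH P p \<mu> \<mu> = 1"
proof -
  have "AffH P p \<mu> \<mu> = (\<integral>\<omega>. p \<mu> \<omega> \<partial>P)"
    unfolding AffH_def by (rule Bochner_Integration.integral_cong) (use pos[OF assms] in \<open>auto simp: less_imp_le\<close>)
  then show ?thesis using dens1(2)[OF assms] by simp
qed

lemma cont_lnI: "\<phi> \<in> F \<Longrightarrow> continuous_on M (\<lambda>\<mu>. ln (\<integral>\<omega>. exp (\<phi> \<omega>) * p \<mu> \<omega> \<partial>P))"
proof -
  assume "\<phi> \<in> F"
  have "convex_on M (\<lambda>\<mu>. - ln (\<integral>\<omega>. exp (\<phi> \<omega>) * p \<mu> \<omega> \<partial>P))"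
    using Fconc[OF \<open>\<phi> \<in> F\<close>] unfolding concave_on_def .
  then have "continuous_on M (\<lambda>\<mu>. - ln (\<integral>\<omega>. exp (\<phi> \<omega>) * p \<mu> \<omega> \<partial>P))"
    using convex_on_continuous openM by blast
  then have "continuous_on M (\<lambda>\<mu>. - (- ln (\<integral>\<omega>. exp (\<phi> \<omega>) * p \<mu> \<omega> \<partial>P)))"
    by (rule continuous_on_minus)
  then show ?thesis by (simp only: minus_minus)
qed

lemma concave_lnaff: "concave_on (M \<times> M) (\<lambda>(\<mu>, \<nu>). ln (AffH P p \<mu> \<nu>))"
  unfolding concave_on_iff
proof (intro conjI ballI allI impI)
  show "convex (M \<times> M)" using convM by (simp add: convex_Times)
  fix x y :: "'v \<times> 'v" and u v :: real
  assume xy: "x \<in> M \<times> M" "y \<in> M \<times> M" and u: "0 \<le> u" and v: "0 \<le> v" and uv: "u + v = 1"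
  obtain \<mu>1 \<nu>1 where x: "x = (\<mu>1, \<nu>1)" by (cases x)
  obtain \<mu>2 \<nu>2 where y: "y = (\<mu>2, \<nu>2)" by (cases y)
  have m: "\<mu>1 \<in> M" "\<nu>1 \<in> M" "\<mu>2 \<in> M" "\<nu>2 \<in> M" using xy x y by auto
  define \<mu> where "\<mu> = u *\<^sub>R \<mu>1 + v *\<^sub>R \<mu>2"
  define \<nu> where "\<nu> = u *\<^sub>R \<nu>1 + v *\<^sub>R \<nu>2"
  have mM: "\<mu> \<in> M" "\<nu> \<in> M" unfolding \<mu>_def \<nu>_def using convM m u v uv unfolding convex_def by auto
  define \<psi> where "\<psi> = psi0 \<mu> \<nu>"
  have psiF: "\<psi> \<in> F" unfolding \<psi>_def using psi0F mM by auto
  have npsiF: "(\<lambda>\<omega>. - \<psi> \<omega>) \<in> F" using Fneg[OF psiF] .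
  define X where "X = ln (\<integral>\<omega>. exp (\<psi> \<omega>) * p \<nu> \<omega> \<partial>P)"
  define X1 where "X1 = ln (\<integral>\<omega>. exp (\<psi> \<omega>) * p \<nu>1 \<omega> \<partial>P)"
  define X2 where "X2 = ln (\<integral>\<omega>. exp (\<psi> \<omega>) * p \<nu>2 \<omega> \<partial>P)"
  define Y where "Y = ln (\<integral>\<omega>. exp (- \<psi> \<omega>) * p \<mu> \<omega> \<partial>P)"
  define Y1 where "Y1 = ln (\<integral>\<omega>. exp (- \<psi> \<omega>) * p \<mu>1 \<omega> \<partial>P)"
  define Y2 where "Y2 = ln (\<integral>\<omega>. exp (- \<psi> \<omega>) * p \<mu>2 \<omega> \<partial>P)"
  define H where "H = ln (AffH P p \<mu> \<nu>)"
  define H1 where "H1 = ln (AffH P p \<mu>1 \<nu>1)"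
  define H2 where "H2 = ln (AffH P p \<mu>2 \<nu>2)"
  have c1: "X \<ge> u * X1 + v * X2"
    using Fconc[OF psiF] m u v uv unfolding concave_on_iff \<nu>_def X_def X1_def X2_def by blast
  have c2: "Y \<ge> u * Y1 + v * Y2"
    using Fconc[OF npsiF] m u v uv unfolding concave_on_iff \<mu>_def Y_def Y1_def Y2_def by blast
  have s1: "2 * H1 \<le> X1 + Y1" unfolding H1_def X1_def Y1_def using CS[OF psiF m(1,2)] .
  have s2: "2 * H2 \<le> X2 + Y2" unfolding H2_def X2_def Y2_def using CS[OF psiF m(3,4)] .
  have e: "2 * H = X + Y" unfolding H_def X_def Y_def \<psi>_def using ln_aff_eq[OF mM] .
  have t1: "u * (2 * H1) \<le> u * X1 + u * Y1" using mult_left_mono[OF s1 u] by (simp add: distrib_left)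
  have t2: "v * (2 * H2) \<le> v * X2 + v * Y2" using mult_left_mono[OF s2 v] by (simp add: distrib_left)
  have "u * H1 + v * H2 \<le> H" using t1 t2 c1 c2 e by linarith
  then have "u * ln (AffH P p \<mu>1 \<nu>1) + v * ln (AffH P p \<mu>2 \<nu>2) \<le> ln (AffH P p \<mu> \<nu>)"
    unfolding H_def H1_def H2_def .
  then show "u * (case x of (\<mu>, \<nu>) \<Rightarrow> ln (AffH P p \<mu> \<nu>)) + v * (case y of (\<mu>, \<nu>) \<Rightarrow> ln (AffH P p \<mu> \<nu>))
      \<le> (case u *\<^sub>R x + v *\<^sub>R y of (\<mu>, \<nu>) \<Rightarrow> ln (AffH P p \<mu> \<nu>))"
    unfolding x y \<mu>_def \<nu>_def by simp
qed

lemma cont_lnaff: "continuous_on (M \<times> M) (\<lambda>(\<mu>, \<nu>). ln (AffH P p \<mu> \<nu>))"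
proof -
  have "convex_on (M \<times> M) (\<lambda>z. - (case z of (\<mu>, \<nu>) \<Rightarrow> ln (AffH P p \<mu> \<nu>)))"
    using concave_lnaff unfolding concave_on_def .
  then have "continuous_on (M \<times> M) (\<lambda>z. - (case z of (\<mu>, \<nu>) \<Rightarrow> ln (AffH P p \<mu> \<nu>)))"
    by (rule convex_on_continuous[rotated]) (simp add: openM open_Times)
  then have "continuous_on (M \<times> M) (\<lambda>z. - (- (case z of (\<mu>, \<nu>) \<Rightarrow> ln (AffH P p \<mu> \<nu>))))"
    by (rule continuous_on_minus)
  then show ?thesis by (simp only: minus_minus)
qed

lemma cont_aff: "continuous_on (M \<times> M) (\<lambda>(\<mu>, \<nu>). AffH P p \<mu> \<nu>)"
proof -
  have h: "continuous_on (M \<times> M) (\<lambda>z. exp (case z of (\<mu>, \<nu>) \<Rightarrow> ln (AffH P p \<mu> \<nu>)))"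
    using cont_lnaff by (rule continuous_on_exp)
  have eq: "exp (case z of (\<mu>, \<nu>) \<Rightarrow> ln (AffH P p \<mu> \<nu>)) = (case z of (\<mu>, \<nu>) \<Rightarrow> AffH P p \<mu> \<nu>)"
    if z: "z \<in> M \<times> M" for z
  proof -
    obtain \<mu> \<nu> where zz: "z = (\<mu>, \<nu>)" by (cases z)
    have "AffH P p \<mu> \<nu> > 0" using aff_pos z zz by auto
    then show ?thesis unfolding zz by simp
  qed
  show ?thesis by (rule continuous_on_cong[THEN iffD1, OF refl eq h]) 
qed

end



lemma aff_comb:
  assumes hA: "\<exists>L b. linear L \<and> (\<forall>x. A x = L x + b)" and uv: "u + v = 1"
  shows "A (u *\<^sub>R x + v *\<^sub>R y) = u *\<^sub>R A x + v *\<^sub>R A y"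
proof -
  obtain L b where L: "linear L" "\<And>x. A x = L x + b" using hA by blast
  have bb: "b = u *\<^sub>R b + v *\<^sub>R b" using uv by (simp add: scaleR_add_left[symmetric])
  have "A (u *\<^sub>R x + v *\<^sub>R y) = u *\<^sub>R L x + v *\<^sub>R L y + b"
    using L by (simp add: linear_add linear_scale)
  also have "\<dots> = u *\<^sub>R L x + v *\<^sub>R L y + (u *\<^sub>R b + v *\<^sub>R b)" using bb by simp
  also have "\<dots> = u *\<^sub>R A x + v *\<^sub>R A y" using L by (simp add: algebra_simps)
  finally show ?thesis .
qed

lemma aff_cont:
  fixes A :: "'n::euclidean_space \<Rightarrow> 'v::real_normed_vector"
  assumes hA: "\<exists>L b. linear L \<and> (\<forall>x. A x = L x + b)"
  shows "continuous_on S A"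
proof -
  obtain L b where L: "linear L" "\<And>x. A x = L x + b" using hA by blast
  have "bounded_linear L" using L(1) linear_conv_bounded_linear by blast
  then have "continuous_on S (\<lambda>x. L x + b)" by (intro continuous_on_add linear_continuous_on continuous_on_const)
  moreover have "A = (\<lambda>x. L x + b)" using L(2) by (rule ext)
  ultimately show ?thesis by simp
qed

context setting begin

definition lnI where "lnI \<psi> \<mu> = ln (\<integral>\<omega>. exp (\<psi> \<omega>) * p \<mu> \<omega> \<partial>P)"

lemma PhiR_eq: "PhiR P p A g r x y \<phi> \<alpha> = inner g x - inner g y + \<alpha> * lnI (\<lambda>\<omega>. \<phi> \<omega> / \<alpha>) (A y)
    + \<alpha> * lnI (\<lambda>\<omega>. - (\<phi> \<omega> / \<alpha>)) (A x) + 2 * \<alpha> * r"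
  unfolding PhiR_def lnI_def by simp

lemma conc_comp:
  fixes A :: "'n::euclidean_space \<Rightarrow> 'v"
  assumes hA: "\<exists>L b. linear L \<and> (\<forall>x. A x = L x + b)" and AX: "A ` X \<subseteq> M" and Xc: "convex X"
    and psi: "\<psi> \<in> F"
  shows "concave_on (X \<times> X) (\<lambda>z. lnI \<psi> (A (snd z)))" "concave_on (X \<times> X) (\<lambda>z. lnI \<psi> (A (fst z)))"
proof -
  have cv: "convex (X \<times> X)" using Xc by (simp add: convex_Times)
  have K: "concave_on M (lnI \<psi>)" using Fconc[OF psi] unfolding lnI_def by simp
  show "concave_on (X \<times> X) (\<lambda>z. lnI \<psi> (A (snd z)))" unfolding concave_on_iff
  proof (intro conjI cv ballI allI impI)
    fix z1 z2 :: "'n \<times> 'n" and u v :: real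
    assume z: "z1 \<in> X \<times> X" "z2 \<in> X \<times> X" and u: "0 \<le> u" and v: "0 \<le> v" and uv: "u + v = 1"
    have m: "A (snd z1) \<in> M" "A (snd z2) \<in> M" using z AX by auto
    have "A (snd (u *\<^sub>R z1 + v *\<^sub>R z2)) = u *\<^sub>R A (snd z1) + v *\<^sub>R A (snd z2)"
      using aff_comb[OF hA uv] by simp
    moreover have "lnI \<psi> (u *\<^sub>R A (snd z1) + v *\<^sub>R A (snd z2)) \<ge> u * lnI \<psi> (A (snd z1)) + v * lnI \<psi> (A (snd z2))"
      using K m u v uv unfolding concave_on_iff by blast
    ultimately show "u * lnI \<psi> (A (snd z1)) + v * lnI \<psi> (A (snd z2)) \<le> lnI \<psi> (A (snd (u *\<^sub>R z1 + v *\<^sub>R z2)))"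
      by simp
  qed
  show "concave_on (X \<times> X) (\<lambda>z. lnI \<psi> (A (fst z)))" unfolding concave_on_iff
  proof (intro conjI cv ballI allI impI)
    fix z1 z2 :: "'n \<times> 'n" and u v :: real
    assume z: "z1 \<in> X \<times> X" "z2 \<in> X \<times> X" and u: "0 \<le> u" and v: "0 \<le> v" and uv: "u + v = 1"
    have m: "A (fst z1) \<in> M" "A (fst z2) \<in> M" using z AX by auto
    have "A (fst (u *\<^sub>R z1 + v *\<^sub>R z2)) = u *\<^sub>R A (fst z1) + v *\<^sub>R A (fst z2)"
      using aff_comb[OF hA uv] by simp
    moreover have "lnI \<psi> (u *\<^sub>R A (fst z1) + v *\<^sub>R A (fst z2)) \<ge> u * lnI \<psi> (A (fst z1)) + v * lnI \<psi> (A (fst z2))"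
      using K m u v uv unfolding concave_on_iff by blast
    ultimately show "u * lnI \<psi> (A (fst z1)) + v * lnI \<psi> (A (fst z2)) \<le> lnI \<psi> (A (fst (u *\<^sub>R z1 + v *\<^sub>R z2)))"
      by simp
  qed
qed

lemma concave_L:
  fixes A :: "'n::euclidean_space \<Rightarrow> 'v" and g :: 'n
  assumes hA: "\<exists>L b. linear L \<and> (\<forall>x. A x = L x + b)" and AX: "A ` X \<subseteq> M" and Xc: "convex X"
    and phi: "\<phi> \<in> F" and a: "\<alpha> > 0"
  shows "concave_on (X \<times> X) (\<lambda>z. PhiR P p A g r (fst z) (snd z) \<phi> \<alpha>)"
proof -
  have p1: "(\<lambda>\<omega>. \<phi> \<omega> / \<alpha>) \<in> F" using Fdiv[OF phi] .
  have p2: "(\<lambda>\<omega>. - (\<phi> \<omega> / \<alpha>)) \<in> F" using Fneg[OF p1] .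
  note K1 = conc_comp(1)[OF hA AX Xc p1] and K2 = conc_comp(2)[OF hA AX Xc p2]
  have cv: "convex (X \<times> X)" using Xc by (simp add: convex_Times)
  show ?thesis unfolding concave_on_iff PhiR_eq
  proof (intro conjI cv ballI allI impI)
    fix z1 z2 :: "'n \<times> 'n" and u v :: real
    assume z: "z1 \<in> X \<times> X" "z2 \<in> X \<times> X" and u: "0 \<le> u" and v: "0 \<le> v" and uv: "u + v = 1"
    define z where "z = u *\<^sub>R z1 + v *\<^sub>R z2"
    define a1 where "a1 = lnI (\<lambda>\<omega>. \<phi> \<omega> / \<alpha>) (A (snd z1))"
    define a2 where "a2 = lnI (\<lambda>\<omega>. \<phi> \<omega> / \<alpha>) (A (snd z2))"
    define a0 where "a0 = lnI (\<lambda>\<omega>. \<phi> \<omega> / \<alpha>) (A (snd z))"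
    define b1 where "b1 = lnI (\<lambda>\<omega>. - (\<phi> \<omega> / \<alpha>)) (A (fst z1))"
    define b2 where "b2 = lnI (\<lambda>\<omega>. - (\<phi> \<omega> / \<alpha>)) (A (fst z2))"
    define b0 where "b0 = lnI (\<lambda>\<omega>. - (\<phi> \<omega> / \<alpha>)) (A (fst z))"
    have ca: "a0 \<ge> u * a1 + v * a2" using K1 z u v uv unfolding concave_on_iff a0_def a1_def a2_def z_def by blast
    have cb: "b0 \<ge> u * b1 + v * b2" using K2 z u v uv unfolding concave_on_iff b0_def b1_def b2_def z_def by blast
    have g1: "inner g (fst z) = u * inner g (fst z1) + v * inner g (fst z2)" unfolding z_def by (simp add: inner_add_right)
    have g2: "inner g (snd z) = u * inner g (snd z1) + v * inner g (snd z2)" unfolding z_def by (simp add: inner_add_right)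
    have rr: "2 * \<alpha> * r = u * (2 * \<alpha> * r) + v * (2 * \<alpha> * r)" using uv by (metis distrib_right mult_1)
    have ma: "\<alpha> * a0 \<ge> u * (\<alpha> * a1) + v * (\<alpha> * a2)"
      using mult_left_mono[OF ca less_imp_le[OF a]] by (simp add: algebra_simps)
    have mb: "\<alpha> * b0 \<ge> u * (\<alpha> * b1) + v * (\<alpha> * b2)"
      using mult_left_mono[OF cb less_imp_le[OF a]] by (simp add: algebra_simps)
    have "u * (inner g (fst z1) - inner g (snd z1) + \<alpha> * a1 + \<alpha> * b1 + 2 * \<alpha> * r)
        + v * (inner g (fst z2) - inner g (snd z2) + \<alpha> * a2 + \<alpha> * b2 + 2 * \<alpha> * r)
        = (u * inner g (fst z1) + v * inner g (fst z2)) - (u * inner g (snd z1) + v * inner g (snd z2))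
          + (u * (\<alpha> * a1) + v * (\<alpha> * a2)) + (u * (\<alpha> * b1) + v * (\<alpha> * b2)) + (u * (2 * \<alpha> * r) + v * (2 * \<alpha> * r))"
      by (simp add: algebra_simps)
    also have "\<dots> \<le> inner g (fst z) - inner g (snd z) + \<alpha> * a0 + \<alpha> * b0 + 2 * \<alpha> * r"
      using g1 g2 rr ma mb by linarith
    finally show "u * (inner g (fst z1) - inner g (snd z1) + \<alpha> * lnI (\<lambda>\<omega>. \<phi> \<omega> / \<alpha>) (A (snd z1)) + \<alpha> * lnI (\<lambda>\<omega>. - (\<phi> \<omega> / \<alpha>)) (A (fst z1)) + 2 * \<alpha> * r)
        + v * (inner g (fst z2) - inner g (snd z2) + \<alpha> * lnI (\<lambda>\<omega>. \<phi> \<omega> / \<alpha>) (A (snd z2)) + \<alpha> * lnI (\<lambda>\<omega>. - (\<phi> \<omega> / \<alpha>)) (A (fst z2)) + 2 * \<alpha> * r)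
        \<le> inner g (fst (u *\<^sub>R z1 + v *\<^sub>R z2)) - inner g (snd (u *\<^sub>R z1 + v *\<^sub>R z2))
          + \<alpha> * lnI (\<lambda>\<omega>. \<phi> \<omega> / \<alpha>) (A (snd (u *\<^sub>R z1 + v *\<^sub>R z2)))
          + \<alpha> * lnI (\<lambda>\<omega>. - (\<phi> \<omega> / \<alpha>)) (A (fst (u *\<^sub>R z1 + v *\<^sub>R z2))) + 2 * \<alpha> * r"
      unfolding a0_def a1_def a2_def b0_def b1_def b2_def z_def .
  qed
qed

lemma cont_L:
  fixes A :: "'n::euclidean_space \<Rightarrow> 'v" and g :: 'n
  assumes hA: "\<exists>L b. linear L \<and> (\<forall>x. A x = L x + b)" and AX: "A ` X \<subseteq> M"
    and phi: "\<phi> \<in> F"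
  shows "continuous_on (X \<times> X) (\<lambda>z. PhiR P p A g r (fst z) (snd z) \<phi> \<alpha>)"
proof -
  have p1: "(\<lambda>\<omega>. \<phi> \<omega> / \<alpha>) \<in> F" using Fdiv[OF phi] .
  have p2: "(\<lambda>\<omega>. - (\<phi> \<omega> / \<alpha>)) \<in> F" using Fneg[OF p1] .
  have cA: "continuous_on UNIV A" using aff_cont[OF hA] .
  have c1: "continuous_on (X \<times> X) (\<lambda>z. A (snd z))"
    by (rule continuous_on_compose2[OF cA]) (auto intro!: continuous_on_snd continuous_on_fst continuous_on_id)
  have c2: "continuous_on (X \<times> X) (\<lambda>z. A (fst z))"
    by (rule continuous_on_compose2[OF cA]) (auto intro!: continuous_on_snd continuous_on_fst continuous_on_id)
  have i1: "A ` snd ` (X \<times> X) \<subseteq> M" "A ` fst ` (X \<times> X) \<subseteq> M" using AX by auto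
  have l1: "continuous_on (X \<times> X) (\<lambda>z. lnI (\<lambda>\<omega>. \<phi> \<omega> / \<alpha>) (A (snd z)))"
    unfolding lnI_def by (rule continuous_on_compose2[OF cont_lnI[OF p1] c1]) (use i1 in auto)
  have l2: "continuous_on (X \<times> X) (\<lambda>z. lnI (\<lambda>\<omega>. - (\<phi> \<omega> / \<alpha>)) (A (fst z)))"
    unfolding lnI_def by (rule continuous_on_compose2[OF cont_lnI[OF p2] c2]) (use i1 in auto)
  show ?thesis unfolding PhiR_eq
    by (intro continuous_intros l1 l2)
qed

end


context setting begin

lemma convexlike:
  fixes A :: "'n::euclidean_space \<Rightarrow> 'v" and g :: 'n
  assumes AX: "A ` X \<subseteq> M"
    and y1: "y1 \<in> F \<times> {0<..}" and y2: "y2 \<in> F \<times> {0<..}" and u: "0 \<le> u" "u \<le> 1"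
  shows "\<exists>y\<in>F \<times> {0<..}. \<forall>z\<in>X \<times> X. PhiR P p A g r (fst z) (snd z) (fst y) (snd y)
     \<le> u * PhiR P p A g r (fst z) (snd z) (fst y1) (snd y1) + (1 - u) * PhiR P p A g r (fst z) (snd z) (fst y2) (snd y2)"
proof -
  obtain \<phi>1 \<alpha>1 where e1: "y1 = (\<phi>1, \<alpha>1)" by (cases y1)
  obtain \<phi>2 \<alpha>2 where e2: "y2 = (\<phi>2, \<alpha>2)" by (cases y2)
  have f1: "\<phi>1 \<in> F" and a1: "\<alpha>1 > 0" using y1 e1 by auto
  have f2: "\<phi>2 \<in> F" and a2: "\<alpha>2 > 0" using y2 e2 by auto
  define \<phi> where "\<phi> = (\<lambda>\<omega>. u * \<phi>1 \<omega> + (1 - u) * \<phi>2 \<omega>)"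
  define \<alpha> where "\<alpha> = u * \<alpha>1 + (1 - u) * \<alpha>2"
  have fF: "\<phi> \<in> F" unfolding \<phi>_def by (rule Fcomb[OF f1 f2])
  have apos: "\<alpha> > 0"
  proof (cases "u = 0")
    case True then show ?thesis unfolding \<alpha>_def using a2 by simp
  next
    case False then have "u > 0" using u by simp
    then have "u * \<alpha>1 > 0" using a1 by simp
    moreover have "(1 - u) * \<alpha>2 \<ge> 0" using u a2 by simp
    ultimately show ?thesis unfolding \<alpha>_def by linarith
  qed
  have n1: "(\<lambda>\<omega>. - \<phi>1 \<omega>) \<in> F" using Fneg[OF f1] .
  have n2: "(\<lambda>\<omega>. - \<phi>2 \<omega>) \<in> F" using Fneg[OF f2] .
  show ?thesis
  proof (intro bexI[of _ "(\<phi>, \<alpha>)"] ballI)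
    show "(\<phi>, \<alpha>) \<in> F \<times> {0<..}" using fF apos by simp
    fix z assume z: "z \<in> X \<times> X"
    define \<mu> where "\<mu> = A (fst z)"
    define \<nu> where "\<nu> = A (snd z)"
    have mM: "\<mu> \<in> M" "\<nu> \<in> M" using z AX unfolding \<mu>_def \<nu>_def by auto
    have q0: "\<And>\<omega>. \<omega> \<in> space P \<Longrightarrow> p \<mu> \<omega> \<ge> 0" "\<And>\<omega>. \<omega> \<in> space P \<Longrightarrow> p \<nu> \<omega> \<ge> 0"
      using pos mM by (auto simp: less_imp_le)
    have I3: "0 < (\<integral>\<omega>. exp ((u * \<phi>1 \<omega> + (1 - u) * \<phi>2 \<omega>) / (u * \<alpha>1 + (1 - u) * \<alpha>2)) * p \<nu> \<omega> \<partial>P)"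
      using Ipos[OF Fdiv[OF Fcomb[OF f1 f2, of u "1 - u"], of "u * \<alpha>1 + (1 - u) * \<alpha>2"] mM(2)] .
    have I4: "0 < (\<integral>\<omega>. exp ((u * - \<phi>1 \<omega> + (1 - u) * - \<phi>2 \<omega>) / (u * \<alpha>1 + (1 - u) * \<alpha>2)) * p \<mu> \<omega> \<partial>P)"
      using Ipos[OF Fdiv[OF Fcomb[OF n1 n2, of u "1 - u"], of "u * \<alpha>1 + (1 - u) * \<alpha>2"] mM(1)] .
    have P1: "\<alpha> * ln (\<integral>\<omega>. exp (\<phi> \<omega> / \<alpha>) * p \<nu> \<omega> \<partial>P)
      \<le> u * (\<alpha>1 * ln (\<integral>\<omega>. exp (\<phi>1 \<omega> / \<alpha>1) * p \<nu> \<omega> \<partial>P)) + (1 - u) * (\<alpha>2 * ln (\<integral>\<omega>. exp (\<phi>2 \<omega> / \<alpha>2) * p \<nu> \<omega> \<partial>P))"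
      unfolding \<phi>_def \<alpha>_def
      by (rule persp_ineq[OF q0(2) a1 a2 u Fint[OF Fdiv[OF f1] mM(2)] Fint[OF Fdiv[OF f2] mM(2)]
            Ipos[OF Fdiv[OF f1] mM(2)] Ipos[OF Fdiv[OF f2] mM(2)]])
         (use I3 in auto)
    have P2': "\<alpha> * ln (\<integral>\<omega>. exp ((u * - \<phi>1 \<omega> + (1 - u) * - \<phi>2 \<omega>) / \<alpha>) * p \<mu> \<omega> \<partial>P)
      \<le> u * (\<alpha>1 * ln (\<integral>\<omega>. exp (- \<phi>1 \<omega> / \<alpha>1) * p \<mu> \<omega> \<partial>P)) + (1 - u) * (\<alpha>2 * ln (\<integral>\<omega>. exp (- \<phi>2 \<omega> / \<alpha>2) * p \<mu> \<omega> \<partial>P))"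
      unfolding \<alpha>_def
      by (rule persp_ineq[OF q0(1) a1 a2 u Fint[OF Fdiv[OF n1] mM(1)] Fint[OF Fdiv[OF n2] mM(1)]
            Ipos[OF Fdiv[OF n1] mM(1)] Ipos[OF Fdiv[OF n2] mM(1)]])
         (use I4 in auto)
    have eqi: "(\<lambda>\<omega>. exp ((u * - \<phi>1 \<omega> + (1 - u) * - \<phi>2 \<omega>) / \<alpha>) * p \<mu> \<omega>) = (\<lambda>\<omega>. exp (- \<phi> \<omega> / \<alpha>) * p \<mu> \<omega>)"
      unfolding \<phi>_def by (rule ext) (simp add: algebra_simps)
    have P2: "\<alpha> * ln (\<integral>\<omega>. exp (- \<phi> \<omega> / \<alpha>) * p \<mu> \<omega> \<partial>P)
      \<le> u * (\<alpha>1 * ln (\<integral>\<omega>. exp (- \<phi>1 \<omega> / \<alpha>1) * p \<mu> \<omega> \<partial>P)) + (1 - u) * (\<alpha>2 * ln (\<integral>\<omega>. exp (- \<phi>2 \<omega> / \<alpha>2) * p \<mu> \<omega> \<partial>P))"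
      using P2' unfolding eqi .
    define G where "G = inner g (fst z) - inner g (snd z)"
    define S1 where "S1 = \<alpha> * ln (\<integral>\<omega>. exp (\<phi> \<omega> / \<alpha>) * p \<nu> \<omega> \<partial>P)"
    define S2 where "S2 = \<alpha> * ln (\<integral>\<omega>. exp (- \<phi> \<omega> / \<alpha>) * p \<mu> \<omega> \<partial>P)"
    define U1 where "U1 = \<alpha>1 * ln (\<integral>\<omega>. exp (\<phi>1 \<omega> / \<alpha>1) * p \<nu> \<omega> \<partial>P)"
    define U2 where "U2 = \<alpha>2 * ln (\<integral>\<omega>. exp (\<phi>2 \<omega> / \<alpha>2) * p \<nu> \<omega> \<partial>P)"
    define V1 where "V1 = \<alpha>1 * ln (\<integral>\<omega>. exp (- \<phi>1 \<omega> / \<alpha>1) * p \<mu> \<omega> \<partial>P)"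
    define V2 where "V2 = \<alpha>2 * ln (\<integral>\<omega>. exp (- \<phi>2 \<omega> / \<alpha>2) * p \<mu> \<omega> \<partial>P)"
    have E0: "PhiR P p A g r (fst z) (snd z) (fst (\<phi>, \<alpha>)) (snd (\<phi>, \<alpha>)) = G + S1 + S2 + 2 * \<alpha> * r"
      unfolding PhiR_def G_def S1_def S2_def \<mu>_def \<nu>_def by simp
    have E1: "PhiR P p A g r (fst z) (snd z) (fst y1) (snd y1) = G + U1 + V1 + 2 * \<alpha>1 * r"
      unfolding PhiR_def G_def U1_def V1_def \<mu>_def \<nu>_def e1 by simp
    have E2: "PhiR P p A g r (fst z) (snd z) (fst y2) (snd y2) = G + U2 + V2 + 2 * \<alpha>2 * r"
      unfolding PhiR_def G_def U2_def V2_def \<mu>_def \<nu>_def e2 by simp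
    have R: "u * (G + U1 + V1 + 2 * \<alpha>1 * r) + (1 - u) * (G + U2 + V2 + 2 * \<alpha>2 * r)
       = G + (u * U1 + (1 - u) * U2) + (u * V1 + (1 - u) * V2) + 2 * \<alpha> * r"
      unfolding \<alpha>_def by (simp add: algebra_simps)
    have "S1 \<le> u * U1 + (1 - u) * U2" using P1 unfolding S1_def U1_def U2_def .
    moreover have "S2 \<le> u * V1 + (1 - u) * V2" using P2 unfolding S2_def V1_def V2_def .
    ultimately show "PhiR P p A g r (fst z) (snd z) (fst (\<phi>, \<alpha>)) (snd (\<phi>, \<alpha>))
     \<le> u * PhiR P p A g r (fst z) (snd z) (fst y1) (snd y1) + (1 - u) * PhiR P p A g r (fst z) (snd z) (fst y2) (snd y2)"
      unfolding E0 E1 E2 R by linarith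
  qed
qed

end


context setting begin

lemma PhiR_scaled:
  assumes a: "\<alpha> > 0"
  shows "PhiR P p A g r x y (\<lambda>\<omega>. \<alpha> * \<psi> \<omega>) \<alpha> = inner g x - inner g y
     + \<alpha> * (ln (\<integral>\<omega>. exp (\<psi> \<omega>) * p (A y) \<omega> \<partial>P) + ln (\<integral>\<omega>. exp (- \<psi> \<omega>) * p (A x) \<omega> \<partial>P)) + 2 * \<alpha> * r"
  unfolding PhiR_def using a by (simp add: algebra_simps)

lemma main:
  fixes X :: "'n::euclidean_space set" and A :: "'n \<Rightarrow> 'v" and g :: 'n and r :: real
  assumes Xne: "X \<noteq> {}" and Xc: "convex X" and Xk: "compact X"
    and hA: "\<exists>L b. linear L \<and> (\<forall>x. A x = L x + b)" and AX: "A ` X \<subseteq> M" and r: "r \<ge> 0"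
  shows "\<exists>x\<in>X. \<exists>y\<in>X. AffH P p (A x) (A y) \<ge> exp (- r)
            \<and> (\<forall>x'\<in>X. \<forall>y'\<in>X. AffH P p (A x') (A y') \<ge> exp (- r)
                  \<longrightarrow> inner g x' - inner g y' \<le> inner g x - inner g y)
            \<and> 2 * PhiStar P p A g F X r = ereal (inner g x - inner g y)"
proof -
  define Z where "Z = X \<times> X"
  define h where "h z = AffH P p (A (fst z)) (A (snd z))" for z
  have cA: "continuous_on UNIV A" using aff_cont[OF hA] .
  have cpair: "continuous_on Z (\<lambda>z. (A (fst z), A (snd z)))"
    by (intro continuous_on_Pair; rule continuous_on_compose2[OF cA])
       (auto intro!: continuous_on_snd continuous_on_fst continuous_on_id)
  have ZM: "(\<lambda>z. (A (fst z), A (snd z))) ` Z \<subseteq> M \<times> M" using AX unfolding Z_def by auto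
  have hc: "continuous_on Z h"
    using continuous_on_compose2[OF cont_aff cpair ZM] unfolding h_def by simp
  have Zk: "compact Z" unfolding Z_def using Xk by (simp add: compact_Times)
  define S where "S = Z \<inter> h -` {exp (- r)..}"
  have "closed S" unfolding S_def
    by (rule continuous_closed_preimage[OF hc]) (use Zk compact_imp_closed in auto)
  moreover have "S = Z \<inter> S" unfolding S_def by auto
  ultimately have Sk: "compact S" using compact_Int_closed[OF Zk] by metis
  obtain x0 where x0: "x0 \<in> X" using Xne by auto
  have "h (x0, x0) = 1" unfolding h_def using aff_self AX x0 by auto
  moreover have "exp (- r) \<le> 1" using r by simp
  ultimately have "(x0, x0) \<in> S" unfolding S_def Z_def using x0 by simp
  then have Sne: "S \<noteq> {}" by auto
  have fc: "continuous_on S (\<lambda>z. inner g (fst z) - inner g (snd z))"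
    by (intro continuous_intros)
  obtain zs where zs: "zs \<in> S" "\<forall>z\<in>S. inner g (fst z) - inner g (snd z) \<le> inner g (fst zs) - inner g (snd zs)"
    using continuous_attains_sup[OF Sk Sne fc] by blast
  define xs where "xs = fst zs"
  define ys where "ys = snd zs"
  define Opt where "Opt = inner g xs - inner g ys"
  have xsX: "xs \<in> X" "ys \<in> X" using zs(1) unfolding S_def Z_def xs_def ys_def by auto
  have feas: "AffH P p (A xs) (A ys) \<ge> exp (- r)" using zs(1) unfolding S_def h_def xs_def ys_def by auto
  have opt: "\<forall>x'\<in>X. \<forall>y'\<in>X. AffH P p (A x') (A y') \<ge> exp (- r) \<longrightarrow> inner g x' - inner g y' \<le> Opt"
  proof (intro ballI impI)
    fix x' y' assume "x' \<in> X" "y' \<in> X" "AffH P p (A x') (A y') \<ge> exp (- r)"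
    then have "(x', y') \<in> S" unfolding S_def Z_def h_def by simp
    then show "inner g x' - inner g y' \<le> Opt" using zs(2) unfolding Opt_def xs_def ys_def by fastforce
  qed
  define T where "T = (INF \<phi>\<alpha>\<in>F \<times> {0<..}. SUP xy\<in>X \<times> X. ereal (PhiR P p A g r (fst xy) (snd xy) (fst \<phi>\<alpha>) (snd \<phi>\<alpha>)))"
  have PS: "2 * PhiStar P p A g F X r = T"
  proof -
    have "2 * PhiStar P p A g F X r = 2 * (ereal (1/2) * T)" unfolding PhiStar_def T_def by (rule refl)
    also have "\<dots> = (2 * ereal (1/2)) * T" by (rule mult.assoc[symmetric])
    also have "(2::ereal) * ereal (1/2) = 1" by (simp add: one_ereal_def numeral_eq_ereal)
    finally show ?thesis by simp
  qed
  have lower: "ereal Opt \<le> T"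
    unfolding T_def
  proof (rule INF_greatest)
    fix y :: "('a \<Rightarrow> real) \<times> real" assume y: "y \<in> F \<times> {0<..}"
    obtain \<phi> \<alpha> where e: "y = (\<phi>, \<alpha>)" by (cases y)
    have phi: "\<phi> \<in> F" and a: "\<alpha> > 0" using y e by auto
    have psi: "(\<lambda>\<omega>. \<phi> \<omega> / \<alpha>) \<in> F" using Fdiv[OF phi] .
    have mM: "A xs \<in> M" "A ys \<in> M" using xsX AX by auto
    have C: "2 * ln (AffH P p (A xs) (A ys)) \<le> lnI (\<lambda>\<omega>. \<phi> \<omega> / \<alpha>) (A ys) + lnI (\<lambda>\<omega>. - (\<phi> \<omega> / \<alpha>)) (A xs)"
      using CS[OF psi mM] unfolding lnI_def by simp
    have "ln (exp (- r)) \<le> ln (AffH P p (A xs) (A ys))"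
      using feas aff_pos[OF mM] by (subst ln_le_cancel_iff) auto
    then have L: "- r \<le> ln (AffH P p (A xs) (A ys))" by simp
    have "0 \<le> \<alpha> * (lnI (\<lambda>\<omega>. \<phi> \<omega> / \<alpha>) (A ys) + lnI (\<lambda>\<omega>. - (\<phi> \<omega> / \<alpha>)) (A xs) + 2 * r)"
      using C L a by (intro mult_nonneg_nonneg) auto
    then have "Opt \<le> PhiR P p A g r xs ys \<phi> \<alpha>"
      unfolding PhiR_eq Opt_def by (simp add: algebra_simps)
    also have "ereal (PhiR P p A g r xs ys \<phi> \<alpha>) \<le> (SUP xy\<in>X \<times> X. ereal (PhiR P p A g r (fst xy) (snd xy) (fst y) (snd y)))"
      using xsX e by (intro SUP_upper2[of "(xs, ys)"]) auto
    finally show "ereal Opt \<le> (SUP xy\<in>X \<times> X. ereal (PhiR P p A g r (fst xy) (snd xy) (fst y) (snd y)))"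
      by simp
  qed
  have upper: "T \<le> ereal Opt"
  proof (rule ereal_le_epsilon2)
    fix \<epsilon> :: real assume eps: "\<epsilon> > 0"
    define c where "c = Opt + \<epsilon>"
    have cov: "\<forall>z\<in>X \<times> X. \<exists>y\<in>F \<times> {0<..}. PhiR P p A g r (fst z) (snd z) (fst y) (snd y) < c"
    proof
      fix z assume z: "z \<in> X \<times> X"
      define \<mu> where "\<mu> = A (fst z)"
      define \<nu> where "\<nu> = A (snd z)"
      have mM: "\<mu> \<in> M" "\<nu> \<in> M" using z AX unfolding \<mu>_def \<nu>_def by auto
      define \<psi> where "\<psi> = psi0 \<mu> \<nu>"
      have psiF: "\<psi> \<in> F" unfolding \<psi>_def using psi0F[OF mM] .
      define D where "D = ln (AffH P p \<mu> \<nu>)"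
      define G where "G = inner g (fst z) - inner g (snd z)"
      have key: "PhiR P p A g r (fst z) (snd z) (\<lambda>\<omega>. \<alpha> * \<psi> \<omega>) \<alpha> = G + 2 * \<alpha> * (D + r)" if a: "\<alpha> > 0" for \<alpha>
        unfolding PhiR_scaled[OF a] G_def D_def using ln_aff_eq[OF mM] unfolding \<psi>_def \<mu>_def \<nu>_def
        by (simp add: algebra_simps)
      have Fa: "(\<lambda>\<omega>. \<alpha> * \<psi> \<omega>) \<in> F" for \<alpha> using Fscale[OF psiF] .
      show "\<exists>y\<in>F \<times> {0<..}. PhiR P p A g r (fst z) (snd z) (fst y) (snd y) < c"
      proof (cases "AffH P p \<mu> \<nu> \<ge> exp (- r)")
        case True
        then have "G \<le> Opt" using opt z unfolding G_def \<mu>_def \<nu>_def by (cases z) auto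
        have D0: "D \<le> 0" unfolding D_def using aff_le1[OF mM] aff_pos[OF mM] by simp
        define \<alpha> where "\<alpha> = \<epsilon> / (4 * r + 4)"
        have a: "\<alpha> > 0" unfolding \<alpha>_def using eps r by simp
        have "2 * \<alpha> * r < \<epsilon>"
        proof -
          have "2 * \<alpha> * r = \<epsilon> * (2 * r) / (4 * r + 4)" unfolding \<alpha>_def by simp
          also have "\<dots> < \<epsilon>" using eps r by (simp add: divide_less_eq)
          finally show ?thesis .
        qed
        moreover have "2 * \<alpha> * D \<le> 0" using D0 a by (simp add: mult_nonneg_nonpos)
        ultimately have "G + 2 * \<alpha> * (D + r) < c" using \<open>G \<le> Opt\<close> unfolding c_def by (simp add: algebra_simps)
        then show ?thesis using key[OF a] Fa a by (intro bexI[of _ "((\<lambda>\<omega>. \<alpha> * \<psi> \<omega>), \<alpha>)"]) auto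
      next
        case False
        then have "AffH P p \<mu> \<nu> < exp (- r)" by simp
        then have "ln (AffH P p \<mu> \<nu>) < ln (exp (- r))" using aff_pos[OF mM] by (subst ln_less_cancel_iff) auto
        then have "D < - r" unfolding D_def by simp
        then have Dn: "D + r < 0" by simp
        define \<alpha> where "\<alpha> = (\<bar>G\<bar> + \<bar>Opt\<bar> + \<epsilon> + 1) / (- 2 * (D + r))"
        have a: "\<alpha> > 0" unfolding \<alpha>_def using Dn eps by (intro divide_pos_pos) auto
        have "2 * \<alpha> * (D + r) = - (\<bar>G\<bar> + \<bar>Opt\<bar> + \<epsilon> + 1)" unfolding \<alpha>_def using Dn by (simp add: field_simps)
        then have "G + 2 * \<alpha> * (D + r) < c" unfolding c_def using eps by linarith
        then show ?thesis using key[OF a] Fa a by (intro bexI[of _ "((\<lambda>\<omega>. \<alpha> * \<psi> \<omega>), \<alpha>)"]) auto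
      qed
    qed
    have "((\<lambda>_. 0), 1::real) \<in> F \<times> {0<..}" using Fconst[of 0] by simp
    then have Yne: "F \<times> {(0::real)<..} \<noteq> {}" by blast
    obtain y0 where y0: "y0 \<in> F \<times> {0<..}" "\<forall>z\<in>X \<times> X. PhiR P p A g r (fst z) (snd z) (fst y0) (snd y0) < c"
    proof -
      have "\<exists>y\<in>F \<times> {0<..}. \<forall>z\<in>X \<times> X. PhiR P p A g r (fst z) (snd z) (fst y) (snd y) < c"
      proof (rule minimax_strict[where L = "\<lambda>z y. PhiR P p A g r (fst z) (snd z) (fst y) (snd y)"])
        show "compact (X \<times> X)" using Xk by (simp add: compact_Times)
        show "convex (X \<times> X)" using Xc by (simp add: convex_Times)
        show "F \<times> {(0::real)<..} \<noteq> {}" by (rule Yne)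
        show "\<And>y1 y2 u. y1 \<in> F \<times> {0<..} \<Longrightarrow> y2 \<in> F \<times> {0<..} \<Longrightarrow> 0 \<le> u \<Longrightarrow> u \<le> 1 \<Longrightarrow>
          \<exists>y\<in>F \<times> {0<..}. \<forall>z\<in>X \<times> X. PhiR P p A g r (fst z) (snd z) (fst y) (snd y)
            \<le> u * PhiR P p A g r (fst z) (snd z) (fst y1) (snd y1) + (1 - u) * PhiR P p A g r (fst z) (snd z) (fst y2) (snd y2)"
          by (rule convexlike[OF AX])
        show "\<And>y. y \<in> F \<times> {0<..} \<Longrightarrow> continuous_on (X \<times> X) (\<lambda>z. PhiR P p A g r (fst z) (snd z) (fst y) (snd y))"
          using cont_L[OF hA AX] by auto
        show "\<And>y. y \<in> F \<times> {0<..} \<Longrightarrow> concave_on (X \<times> X) (\<lambda>z. PhiR P p A g r (fst z) (snd z) (fst y) (snd y))"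
          using concave_L[OF hA AX Xc] by auto
        show "\<forall>z\<in>X \<times> X. \<exists>y\<in>F \<times> {0<..}. PhiR P p A g r (fst z) (snd z) (fst y) (snd y) < c" by (rule cov)
      qed
      then show ?thesis using that by blast
    qed
    have "T \<le> (SUP xy\<in>X \<times> X. ereal (PhiR P p A g r (fst xy) (snd xy) (fst y0) (snd y0)))"
      unfolding T_def by (rule INF_lower) (rule y0(1))
    also have "\<dots> \<le> ereal c"
      by (rule SUP_least) (use y0(2) in \<open>auto simp: less_imp_le\<close>)
    finally show "T \<le> ereal Opt + ereal \<epsilon>" unfolding c_def by simp
  qed
  have "T = ereal Opt" using upper lower by (rule order.antisym)
  then show ?thesis using xsX feas opt PS unfolding Opt_def by blast
qed

end

theorem proposition3p1:
  fixes P :: "'a::polish_space measure"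
    and M :: "'v::euclidean_space set"
    and p :: "'v \<Rightarrow> 'a \<Rightarrow> real"
    and F :: "('a \<Rightarrow> real) set"
    and X :: "'n::euclidean_space set"
    and A :: "'n \<Rightarrow> 'v"
    and g :: "'n"
  assumes "sets P = sets borel"
    and "sigma_finite_measure P"
    and "density_family P M p"
    and "fin_dim_fun_space P F"
    and "good_pair P M p F"
    and "X \<noteq> {}" and "convex X" and "compact X"
    and "\<exists>L b. linear L \<and> (\<forall>x. A x = L x + b)"
    and "A ` X \<subseteq> M"
  shows "continuous_on (M \<times> M) (\<lambda>(\<mu>, \<nu>). AffH P p \<mu> \<nu>)
    \<and> concave_on (M \<times> M) (\<lambda>(\<mu>, \<nu>). ln (AffH P p \<mu> \<nu>))
    \<and> (\<forall>r::real. r \<ge> 0 \<longrightarrow>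
         (\<exists>x\<in>X. \<exists>y\<in>X. AffH P p (A x) (A y) \<ge> exp (- r)
            \<and> (\<forall>x'\<in>X. \<forall>y'\<in>X. AffH P p (A x') (A y') \<ge> exp (- r)
                  \<longrightarrow> inner g x' - inner g y' \<le> inner g x - inner g y)
            \<and> 2 * PhiStar P p A g F X r = ereal (inner g x - inner g y)))"
  proof -
  interpret setting P M p F using assms(3,4,5) by unfold_locales
  show ?thesis using cont_aff concave_lnaff main[OF assms(6,7,8,9,10)] by blast
qed

end
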